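(* (i) For any Lipschitz $\phi:\mathbb R\to\mathbb R$ bounded from below and any $0<\lambda<\lambda'$, $\mathcal M^\lambda\phi\le\mathcal M^{\lambda'}\phi$ on $\mathbb R$. (ii) For any $\lambda>0$ and any $\phi\in\mathscr F$, $\mathcal M\phi\le\mathcal M^\lambda\phi$ on $\mathbb R$. (iii) For any Lipschitz $\phi$ bounded from below and any compact $K\subset\mathbb R$, $\lim_{\lambda\to0^+}\|\mathcal M^\lambda\phi-\mathcal M\phi\|_{L^\infty(K)}=0$.
   Context: Let $l:\mathbb R\to\mathbb R$ satisfy: there is $K_0>0$ with $\inf l=l(0)=K_0$ and $l(x)+l(y)\ge l(x+y)+K_0$ for all $x,y$; $l(\xi)\to+\infty$ as $|\xi|\to\infty$; $l$ is $L_l$-Lipschitz. $\Phi_x=\mathcal N(-x,1)$. For $\lambda>0$ and $\phi$ bounded below, $\mathcal M^\lambda\phi(x)=\inf\{\int(\phi(x+\xi)+l(\xi))\mu(d\xi)+\lambda D_{KL}(\mu\|\Phi_x)\}$ over probability measures $\mu\ll\Phi_x$ ($D_{KL}$ the Kullback–Leibler divergence); $\mathcal M\phi(x)=\inf_{\xi\in\mathbb R}[\phi(x+\xi)+l(\xi)]$. $\mathscr F$ is the set of $\phi:\mathbb R\to\mathbb R$ with $\inf\phi\in\mathbb R$ and $\sup_x|\phi(x)|/(1+|x|^\beta)<\infty$ for some $\beta\ge0$. *)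

theory Defs
  imports "HOL-Analysis.Analysis" "HOL-Probability.Probability"
begin

definition Phi :: "real \<Rightarrow> real measure" where
  "Phi x = density lborel (\<lambda>\<xi>. ennreal (normal_density (- x) 1 \<xi>))"

text \<open>Kullback-Leibler divergence D(mu || nu) with natural logarithm
 (library: KL_divergence b M N = integral over N of log_b (dN/dM)).\<close>
definition DKL :: "real measure \<Rightarrow> real measure \<Rightarrow> real" where
  "DKL \<mu> \<nu> = KL_divergence (exp 1) \<nu> \<mu>"

text \<open>Admissible measures: probability measures mu << Phi_x for which both the
 cost integral and the KL divergence are finite (measures with infinite value
 of the functional do not affect the infimum, since the functional is bounded below).\<close>
definition admissible :: "(real \<Rightarrow> real) \<Rightarrow> (real \<Rightarrow> real) \<Rightarrow> real \<Rightarrow> real measure \<Rightarrow> bool" where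
  "admissible l \<phi> x \<mu> \<longleftrightarrow> prob_space \<mu> \<and> sets \<mu> = sets borel \<and>
     absolutely_continuous (Phi x) \<mu> \<and>
     integrable \<mu> (\<lambda>\<xi>. \<phi> (x + \<xi>) + l \<xi>) \<and>
     integrable \<mu> (entropy_density (exp 1) (Phi x) \<mu>)"

definition Mlam :: "(real \<Rightarrow> real) \<Rightarrow> real \<Rightarrow> (real \<Rightarrow> real) \<Rightarrow> real \<Rightarrow> real" where
  "Mlam l lam \<phi> x = Inf {(\<integral>\<xi>. \<phi> (x + \<xi>) + l \<xi> \<partial>\<mu>) + lam * DKL \<mu> (Phi x) | \<mu>. admissible l \<phi> x \<mu>}"

definition Mop :: "(real \<Rightarrow> real) \<Rightarrow> (real \<Rightarrow> real) \<Rightarrow> real \<Rightarrow> real" where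
  "Mop l \<phi> x = (INF \<xi>. \<phi> (x + \<xi>) + l \<xi>)"

text \<open>The class F (the convention 0 powr 0 = 0 only affects the single point x = 0
 and is irrelevant for the boundedness of the quotient).\<close>
definition classF :: "(real \<Rightarrow> real) set" where
  "classF = {\<phi>. bdd_below (range \<phi>) \<and>
     (\<exists>\<beta>\<ge>0. bdd_above (range (\<lambda>x. \<bar>\<phi> x\<bar> / (1 + \<bar>x\<bar> powr \<beta>))))}"

end

theory Submission
  imports Defs
begin

lemma (in information_space) KL_nonneg_ac:
  assumes "prob_space N"
  assumes ac: "absolutely_continuous M N" "sets N = sets M"
  assumes int: "integrable N (entropy_density b M N)"
  shows "0 \<le> KL_divergence b M N"
proof -
  interpret N: prob_space N by fact
  have "finite_measure N" by unfold_locales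
  from real_RN_deriv[OF this ac] obtain D
    where D:
      "random_variable borel D"
      "AE x in M. RN_deriv M N x = ennreal (D x)"
      "AE x in N. 0 < D x"
      "\<And>x. 0 \<le> D x"
    by this auto
  have "N = density M (RN_deriv M N)"
    using ac by (rule density_RN_deriv[symmetric])
  also have "\<dots> = density M D"
    using D by (auto intro!: density_cong)
  finally have N: "N = density M D" .
  from absolutely_continuous_AE[OF ac(2,1) D(2)] D b_gt_1 ac measurable_entropy_density
  have "integrable N (\<lambda>x. log b (D x))"
    by (intro integrable_cong_AE[THEN iffD2, OF _ _ _ int])
       (auto simp: N entropy_density_def)
  with D b_gt_1 have "integrable M (\<lambda>x. D x * log b (D x))"
    by (subst integrable_real_density[symmetric]) (auto simp: N[symmetric] comp_def)
  with \<open>prob_space N\<close> D show ?thesis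
    unfolding N
    by (intro KL_nonneg) auto
qed


lemma Phi_prob: "prob_space (Phi x)"
  unfolding Phi_def using prob_space_normal_density[of 1 "-x"] by simp

lemma sets_Phi[simp]: "sets (Phi x) = sets borel"
  unfolding Phi_def by simp

lemma DKL_nonneg:
  assumes "admissible l \<phi> x \<mu>"
  shows "0 \<le> DKL \<mu> (Phi x)"
proof -
  interpret information_space "Phi x" "exp 1"
    by (simp add: information_space_def information_space_axioms_def Phi_prob)
  show ?thesis using assms unfolding DKL_def admissible_def
    by (intro KL_nonneg_ac) auto
qed

lemma powr_le_poly:
  fixes t \<beta> :: real assumes "\<beta> \<ge> 0"
  shows "\<bar>t\<bar> powr \<beta> \<le> 1 + t ^ (2 * nat \<lceil>\<beta>\<rceil>)"
proof (cases "\<bar>t\<bar> \<le> 1")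
  case True
  then have "\<bar>t\<bar> powr \<beta> \<le> 1"
    using assms powr_mono2[of \<beta> "\<bar>t\<bar>" 1] by simp
  moreover have "0 \<le> t ^ (2 * nat \<lceil>\<beta>\<rceil>)" by (simp add: zero_le_even_power)
  ultimately show ?thesis by linarith
next
  case False
  have "\<beta> \<le> real (2 * nat \<lceil>\<beta>\<rceil>)" using assms by linarith
  then have "\<bar>t\<bar> powr \<beta> \<le> \<bar>t\<bar> powr real (2 * nat \<lceil>\<beta>\<rceil>)"
    using False by (intro powr_mono) auto
  also have "\<dots> = \<bar>t\<bar> ^ (2 * nat \<lceil>\<beta>\<rceil>)"
    using False by (subst powr_realpow) auto
  also have "\<dots> = t ^ (2 * nat \<lceil>\<beta>\<rceil>)" by (simp add: power_even_abs)
  finally show ?thesis by simp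
qed

lemma Phi_moment: "integrable (Phi x) (\<lambda>\<xi>. (\<xi> + x) ^ k)"
proof -
  have "integrable lborel (\<lambda>\<xi>. normal_density (-x) 1 \<xi> * (\<xi> - (-x)) ^ k)"
    by (rule integrable_normal_moment) simp
  then show ?thesis unfolding Phi_def
    by (subst integrable_density) (auto simp: normal_density_nonneg)
qed

lemma entropy_self_int: "integrable (Phi x) (entropy_density (exp 1) (Phi x) (Phi x))"
proof -
  interpret prob_space "Phi x" by (rule Phi_prob)
  have "AE \<xi> in Phi x. (\<lambda>_. 1) \<xi> = RN_deriv (Phi x) (Phi x) \<xi>"
    by (rule RN_deriv_unique) (auto simp: density_1)
  then have "AE \<xi> in Phi x. entropy_density (exp 1) (Phi x) (Phi x) \<xi> = 0"
    by eventually_elim (auto simp: entropy_density_def)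
  then show ?thesis
    by (subst integrable_cong_AE[where g="\<lambda>_. 0"]) auto
qed

lemma lip_bound:
  assumes "L-lipschitz_on UNIV f"
  shows "\<bar>f y\<bar> \<le> \<bar>f z\<bar> + L * \<bar>y - z\<bar>"
proof -
  have "dist (f y) (f z) \<le> L * dist y z" using assms lipschitz_onD by blast
  then show ?thesis by (simp add: dist_real_def)
qed

lemma lip_meas:
  assumes "L-lipschitz_on UNIV f"
  shows "f \<in> borel_measurable borel"
  using assms lipschitz_on_continuous_on by (intro borel_measurable_continuous_onI) blast

lemma Phi_admissible:
  assumes meas: "\<phi> \<in> borel_measurable borel"
    and bnd: "\<And>y. \<bar>\<phi> y\<bar> \<le> C * (1 + \<bar>y\<bar> powr \<beta>)" and b0: "\<beta> \<ge> 0"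
    and llip: "Ll-lipschitz_on UNIV l"
  shows "admissible l \<phi> x (Phi x)"
proof -
  define n where "n = 2 * nat \<lceil>\<beta>\<rceil>"
  have h: "1 + \<bar>0::real\<bar> powr \<beta> > 0" by simp
  have "0 \<le> C * (1 + \<bar>0::real\<bar> powr \<beta>)" using bnd[of 0] abs_ge_zero[of "\<phi> 0"] by linarith
  then have C0: "C \<ge> 0" using h by (auto simp: zero_le_mult_iff)
  have Ll0: "Ll \<ge> 0" using llip lipschitz_on_nonneg by blast
  have lm[measurable]: "l \<in> borel_measurable borel" using lip_meas llip by blast
  note [measurable] = meas
  have hc: "\<And>c::real. integrable (Phi x) (\<lambda>_. c)"
  proof -
    fix c :: real
    interpret prob_space "Phi x" by (rule Phi_prob)
    show "integrable (Phi x) (\<lambda>_. c)" by simp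
  qed
  define G where "G = (\<lambda>\<xi>. C * (2 + (\<xi> + x) ^ n) + (\<bar>l 0\<bar> + Ll * \<bar>x\<bar> + Ll * (1 + (\<xi> + x) ^ 2)))"
  have "integrable (Phi x) G"
    unfolding G_def using Phi_moment[of x n] Phi_moment[of x 2] hc
    by (intro Bochner_Integration.integrable_add integrable_mult_right) simp_all
  then have "integrable (Phi x) (\<lambda>\<xi>. \<phi> (x + \<xi>) + l \<xi>)"
  proof (rule Bochner_Integration.integrable_bound)
    show "(\<lambda>\<xi>. \<phi> (x + \<xi>) + l \<xi>) \<in> borel_measurable (Phi x)"
      by (subst measurable_cong_sets[OF sets_Phi refl]) measurable
    show "AE \<xi> in Phi x. norm (\<phi> (x + \<xi>) + l \<xi>) \<le> norm (G \<xi>)"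
    proof (intro AE_I2)
      fix \<xi>
      have q: "1 + \<bar>x+\<xi>\<bar> powr \<beta> \<le> 2 + (\<xi> + x) ^ n"
        using powr_le_poly[OF b0, of "x+\<xi>"] unfolding n_def by (simp add: add.commute)
      have p1: "\<bar>\<phi> (x + \<xi>)\<bar> \<le> C * (2 + (\<xi> + x) ^ n)"
        using bnd[of "x+\<xi>"] mult_left_mono[OF q C0] by linarith
      have q2: "\<bar>\<xi> + x\<bar> \<le> 1 + (\<xi> + x) ^ 2"
        using powr_le_poly[of 1 "\<xi>+x"] by simp
      have q3: "\<bar>\<xi>\<bar> \<le> \<bar>x\<bar> + (1 + (\<xi> + x) ^ 2)" using q2 by linarith
      have p2: "\<bar>l \<xi>\<bar> \<le> \<bar>l 0\<bar> + Ll * \<bar>x\<bar> + Ll * (1 + (\<xi> + x) ^ 2)"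
      proof -
        have "\<bar>l \<xi>\<bar> \<le> \<bar>l 0\<bar> + Ll * \<bar>\<xi> - 0\<bar>" by (rule lip_bound[OF llip])
        moreover have "Ll * \<bar>\<xi>\<bar> \<le> Ll * (\<bar>x\<bar> + (1 + (\<xi> + x) ^ 2))"
          by (rule mult_left_mono[OF q3 Ll0])
        ultimately show ?thesis by (simp add: distrib_left)
      qed
      have z1: "0 \<le> (\<xi> + x) ^ n" unfolding n_def by (simp add: zero_le_even_power)
      have z2: "0 \<le> C * (2 + (\<xi> + x) ^ n)" using z1 C0 by simp
      have z3: "0 \<le> Ll * (1 + (\<xi> + x) ^ 2)" using Ll0 by simp
      have z4: "0 \<le> Ll * \<bar>x\<bar>" using Ll0 by simp
      have "G \<xi> \<ge> 0" unfolding G_def using z2 z3 z4 by simp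
      then show "norm (\<phi> (x + \<xi>) + l \<xi>) \<le> norm (G \<xi>)"
        using p1 p2 abs_triangle_ineq[of "\<phi> (x + \<xi>)" "l \<xi>"] unfolding G_def by simp
    qed
  qed
  then show ?thesis
    unfolding admissible_def using Phi_prob entropy_self_int
    by (auto simp: absolutely_continuous_def)
qed

definition Unif :: "real \<Rightarrow> real \<Rightarrow> real measure" where
  "Unif a d = density lborel (\<lambda>\<xi>. ennreal (indicator {a-d..a+d} \<xi> / (2*d)))"

lemma sets_Unif[simp]: "sets (Unif a d) = sets borel"
  unfolding Unif_def by simp

lemma Unif_prob:
  assumes "d > 0" shows "prob_space (Unif a d)"
proof
  have "emeasure (Unif a d) (space (Unif a d)) = (\<integral>\<^sup>+ \<xi>. ennreal (1/(2*d)) * indicator {a-d..a+d} \<xi> \<partial>lborel)"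
    unfolding Unif_def
    by (subst emeasure_density) (auto intro!: nn_integral_cong simp: indicator_def)
  also have "\<dots> = ennreal (1/(2*d)) * ennreal (2*d)"
    using assms by (subst nn_integral_cmult_indicator) auto
  also have "\<dots> = 1" using assms by (simp add: ennreal_mult''[symmetric])
  finally show "emeasure (Unif a d) (space (Unif a d)) = 1" .
qed

lemma AE_Unif:
  assumes "d > 0" shows "AE \<xi> in Unif a d. \<xi> \<in> {a-d..a+d}"
  unfolding Unif_def
  by (subst AE_density) (auto simp: indicator_def)

lemma AE_lborel_Unif:
  assumes "AE \<xi> in lborel. P \<xi>" shows "AE \<xi> in Unif a d. P \<xi>"
  unfolding Unif_def
  using assms by (subst AE_density) (auto elim: AE_mp)

lemma AE_Phi_lborel:
  assumes "AE \<xi> in Phi x. P \<xi>" shows "AE \<xi> in lborel. P \<xi>"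
  using assms unfolding Phi_def
  by (subst (asm) AE_density) (auto simp: normal_density_pos elim: AE_mp)

lemma Unif_ac: "absolutely_continuous (Phi x) (Unif a d)"
  unfolding absolutely_continuous_def
proof
  fix A assume A: "A \<in> null_sets (Phi x)"
  then have As: "A \<in> sets borel" by (auto dest: null_setsD2)
  have "AE \<xi> in Phi x. \<xi> \<notin> A" using A As by (subst AE_iff_null_sets[symmetric]) auto
  then have "AE \<xi> in lborel. \<xi> \<notin> A" by (rule AE_Phi_lborel)
  then have "AE \<xi> in Unif a d. \<xi> \<notin> A" by (rule AE_lborel_Unif)
  then show "A \<in> null_sets (Unif a d)" using As by (subst AE_iff_null_sets) auto
qed

lemma Unif_entropy:
  assumes d: "d > 0"
  shows "AE \<xi> in Unif a d. entropy_density (exp 1) (Phi x) (Unif a d) \<xi>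
     = - ln (2*d) + ln (sqrt (2*pi)) + (\<xi> + x)\<^sup>2 / 2"
proof -
  interpret prob_space "Phi x" by (rule Phi_prob)
  define h where "h = (\<lambda>\<xi>. indicator {a-d..a+d} \<xi> / (2*d*normal_density (-x) 1 \<xi>))"
  have hm[measurable]: "h \<in> borel_measurable borel" unfolding h_def by measurable
  have "density (Phi x) (\<lambda>\<xi>. ennreal (h \<xi>)) = Unif a d"
    unfolding Phi_def Unif_def
    apply (subst density_density_eq)
      apply (auto intro!: density_cong simp: h_def ennreal_mult''[symmetric] normal_density_nonneg)
    apply (intro AE_I2 impI)
    subgoal premises p for \<xi>
  proof -
    let ?c = "indicat_real {a - d..a + d} \<xi>"
    have np: "normal_density (-x) 1 \<xi> > 0" by (rule normal_density_pos) simp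
    have c0: "?c \<ge> 0" by simp
    have "ennreal (normal_density (- x) 1 \<xi>) * ennreal (?c / (2 * d * normal_density (- x) 1 \<xi>))
       = ennreal (normal_density (- x) 1 \<xi> * (?c / (2 * d * normal_density (- x) 1 \<xi>)))"
      using d np c0 by (subst ennreal_mult) auto
    also have "normal_density (- x) 1 \<xi> * (?c / (2 * d * normal_density (- x) 1 \<xi>)) = ?c / (2*d)"
      using np d by (simp add: field_simps)
    finally show ?thesis .
  qed
  done
  then have "AE \<xi> in Phi x. ennreal (h \<xi>) = RN_deriv (Phi x) (Unif a d) \<xi>"
    by (intro RN_deriv_unique) (auto simp: measurable_cong_sets[OF sets_Phi refl])
  then have "AE \<xi> in Unif a d. ennreal (h \<xi>) = RN_deriv (Phi x) (Unif a d) \<xi>"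
    by (intro AE_lborel_Unif AE_Phi_lborel)
  then show ?thesis using AE_Unif[OF d, of a]
  proof eventually_elim
    case (elim \<xi>)
    have np: "normal_density (-x) 1 \<xi> > 0" by (rule normal_density_pos) simp
    have "entropy_density (exp 1) (Phi x) (Unif a d) \<xi> = ln (h \<xi>)"
      using elim(1)[symmetric] np d unfolding entropy_density_def h_def
      by (simp add: log_def)
    also have "\<dots> = ln (1 / (2*d*normal_density (-x) 1 \<xi>))"
      using elim(2) unfolding h_def by simp
    also have "\<dots> = - ln (2*d) - ln (normal_density (-x) 1 \<xi>)"
      using np d by (simp add: ln_div ln_mult)
    also have "ln (normal_density (-x) 1 \<xi>) = - ln (sqrt (2*pi)) - (\<xi> + x)\<^sup>2 / 2"
      unfolding normal_density_def by (simp add: ln_mult ln_div)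
    finally show ?case by simp
  qed
qed

lemma Unif_main:
  assumes d: "d > 0" and lipphi: "L-lipschitz_on UNIV \<phi>" and llip: "Ll-lipschitz_on UNIV l"
  shows "admissible l \<phi> x (Unif a d)"
    and "(\<integral>\<xi>. \<phi> (x + \<xi>) + l \<xi> \<partial>Unif a d) \<le> \<phi> (x + a) + l a + (L + Ll) * d"
    and "DKL (Unif a d) (Phi x) \<le> \<bar>ln (2*d)\<bar> + ln (sqrt (2*pi)) + (\<bar>a\<bar> + d + \<bar>x\<bar>)\<^sup>2 / 2"
proof -
  interpret U: prob_space "Unif a d" by (rule Unif_prob[OF d])
  have pm[measurable]: "\<phi> \<in> borel_measurable borel" using lip_meas lipphi by blast
  have lm[measurable]: "l \<in> borel_measurable borel" using lip_meas llip by blast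
  define B where "B = \<bar>ln (2*d)\<bar> + ln (sqrt (2*pi)) + (\<bar>a\<bar> + d + \<bar>x\<bar>)\<^sup>2 / 2"
  have ln0: "ln (sqrt (2*pi)) \<ge> 0" using pi_gt3 by simp
  have entB: "AE \<xi> in Unif a d. \<bar>entropy_density (exp 1) (Phi x) (Unif a d) \<xi>\<bar> \<le> B"
    using Unif_entropy[OF d, where a=a and x=x] AE_Unif[OF d, of a]
  proof eventually_elim
    case (elim \<xi>)
    have "\<bar>\<xi> + x\<bar> \<le> \<bar>a\<bar> + d + \<bar>x\<bar>" using elim(2) by auto
    then have "\<bar>\<xi> + x\<bar>\<^sup>2 \<le> (\<bar>a\<bar> + d + \<bar>x\<bar>)\<^sup>2" by (intro power_mono) auto
    then have "(\<xi> + x)\<^sup>2 \<le> (\<bar>a\<bar> + d + \<bar>x\<bar>)\<^sup>2" by simp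
    moreover have "0 \<le> (\<xi> + x)\<^sup>2" by simp
    moreover have "ln (2*d) \<le> \<bar>ln (2*d)\<bar>" "- ln (2*d) \<le> \<bar>ln (2*d)\<bar>" by auto
    ultimately show ?case using ln0 unfolding B_def elim(1) abs_le_iff by linarith
  qed
  have entI: "integrable (Unif a d) (entropy_density (exp 1) (Phi x) (Unif a d))"
    by (rule U.integrable_const_bound[OF entB[unfolded real_norm_def[symmetric]]])
       (metis measurable_entropy_density measurable_cong_sets sets_Phi sets_Unif)
  have L0: "L \<ge> 0" using lipphi lipschitz_on_nonneg by blast
  have Ll0: "Ll \<ge> 0" using llip lipschitz_on_nonneg by blast
  have costB: "AE \<xi> in Unif a d. \<bar>(\<phi> (x + \<xi>) + l \<xi>) - (\<phi> (x + a) + l a)\<bar> \<le> (L + Ll) * d"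
    using AE_Unif[OF d, of a]
  proof eventually_elim
    case (elim \<xi>)
    have h: "\<bar>\<xi> - a\<bar> \<le> d" using elim by auto
    have "dist (\<phi> (x + \<xi>)) (\<phi> (x + a)) \<le> L * dist (x + \<xi>) (x + a)" using lipphi lipschitz_onD by blast
    moreover have "dist (l \<xi>) (l a) \<le> Ll * dist \<xi> a" using llip lipschitz_onD by blast
    ultimately have "\<bar>(\<phi> (x + \<xi>) + l \<xi>) - (\<phi> (x + a) + l a)\<bar> \<le> L * \<bar>\<xi> - a\<bar> + Ll * \<bar>\<xi> - a\<bar>"
      by (simp add: dist_real_def)
    also have "\<dots> \<le> L * d + Ll * d" using h L0 Ll0 by (intro add_mono mult_left_mono) auto
    finally show ?case by (simp add: distrib_right)
  qed
  have fm: "(\<lambda>\<xi>. \<phi> (x + \<xi>) + l \<xi>) \<in> borel_measurable (Unif a d)"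
    by (subst measurable_cong_sets[OF sets_Unif refl]) measurable
  have costI: "integrable (Unif a d) (\<lambda>\<xi>. \<phi> (x + \<xi>) + l \<xi>)"
  proof (rule U.integrable_const_bound[OF _ fm])
    show "AE \<xi> in Unif a d. norm (\<phi> (x + \<xi>) + l \<xi>) \<le> \<bar>\<phi> (x + a) + l a\<bar> + (L + Ll) * d"
      using costB by eventually_elim auto
  qed
  show "admissible l \<phi> x (Unif a d)"
    unfolding admissible_def using Unif_prob[OF d] Unif_ac costI entI by auto
  show "(\<integral>\<xi>. \<phi> (x + \<xi>) + l \<xi> \<partial>Unif a d) \<le> \<phi> (x + a) + l a + (L + Ll) * d"
    using costB by (intro U.integral_le_const[OF costI]) (auto elim: AE_mp)
  show "DKL (Unif a d) (Phi x) \<le> B"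
    unfolding DKL_def KL_divergence_def
    using entB by (intro U.integral_le_const[OF entI]) (auto elim: AE_mp)
qed

lemma lip_classF:
  assumes lip: "L-lipschitz_on UNIV \<phi>" and bb: "bdd_below (range \<phi>)"
  shows "\<phi> \<in> classF"
proof -
  have L0: "L \<ge> 0" using lip lipschitz_on_nonneg by blast
  define M where "M = max \<bar>\<phi> 0\<bar> L"
  have "\<forall>y. \<bar>\<phi> y\<bar> / (1 + \<bar>y\<bar> powr 1) \<le> M"
  proof
    fix y :: real
    have "\<bar>\<phi> y\<bar> \<le> \<bar>\<phi> 0\<bar> + L * \<bar>y - 0\<bar>" by (rule lip_bound[OF lip])
    also have "\<dots> \<le> M + M * \<bar>y\<bar>"
    proof -
      have "L \<le> M" "\<bar>\<phi> 0\<bar> \<le> M" unfolding M_def by auto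
      then show ?thesis using mult_right_mono[OF \<open>L \<le> M\<close> abs_ge_zero[of y]] by simp
    qed
    also have "\<dots> = M * (1 + \<bar>y\<bar> powr 1)" by (simp add: algebra_simps)
    finally show "\<bar>\<phi> y\<bar> / (1 + \<bar>y\<bar> powr 1) \<le> M"
      by (simp add: divide_le_eq add_pos_nonneg)
  qed
  then show ?thesis unfolding classF_def using bb
    by (intro CollectI conjI exI[of _ 1]) (auto intro!: bdd_aboveI[of _ M])
qed

lemma classF_bound:
  assumes "\<phi> \<in> classF"
  obtains C \<beta> where "\<beta> \<ge> 0" "\<And>y. \<bar>\<phi> y\<bar> \<le> C * (1 + \<bar>y\<bar> powr \<beta>)"
proof -
  from assms obtain \<beta> where b: "\<beta> \<ge> 0" and ba: "bdd_above (range (\<lambda>x. \<bar>\<phi> x\<bar> / (1 + \<bar>x\<bar> powr \<beta>)))"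
    unfolding classF_def by blast
  from ba obtain C where C: "\<And>x. \<bar>\<phi> x\<bar> / (1 + \<bar>x\<bar> powr \<beta>) \<le> C"
    by (auto simp: bdd_above_def)
  have "\<bar>\<phi> y\<bar> \<le> C * (1 + \<bar>y\<bar> powr \<beta>)" for y
  proof -
    have "1 + \<bar>y\<bar> powr \<beta> > 0" by (simp add: add_pos_nonneg)
    then show ?thesis using C[of y] by (simp add: divide_le_eq)
  qed
  then show ?thesis using that b by blast
qed

lemma Mop_le:
  assumes bb: "bdd_below (range \<phi>)" and lmin: "\<And>x. l x \<ge> K0"
  shows "Mop l \<phi> x \<le> \<phi> (x + \<xi>) + l \<xi>"
proof -
  from bb obtain c where c: "\<And>y. c \<le> \<phi> y" by (auto simp: bdd_below_def)
  have "bdd_below (range (\<lambda>\<xi>. \<phi> (x + \<xi>) + l \<xi>))"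
    using c lmin by (intro bdd_belowI[of _ "c + K0"]) (auto intro: add_mono)
  then show ?thesis unfolding Mop_def by (rule cINF_lower) simp
qed

lemma lower:
  assumes bb: "bdd_below (range \<phi>)" and lmin: "\<And>x. l x \<ge> K0" and lam: "lam \<ge> 0"
    and adm: "admissible l \<phi> x \<mu>"
  shows "Mop l \<phi> x \<le> (\<integral>\<xi>. \<phi> (x + \<xi>) + l \<xi> \<partial>\<mu>) + lam * DKL \<mu> (Phi x)"
proof -
  interpret prob_space \<mu> using adm unfolding admissible_def by blast
  have h: "\<And>\<xi>. Mop l \<phi> x \<le> \<phi> (x + \<xi>) + l \<xi>" by (rule Mop_le[OF bb lmin])
  have "Mop l \<phi> x \<le> (\<integral>\<xi>. \<phi> (x + \<xi>) + l \<xi> \<partial>\<mu>)"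
    using adm h unfolding admissible_def
    by (intro integral_ge_const AE_I2) auto
  moreover have "0 \<le> lam * DKL \<mu> (Phi x)" using DKL_nonneg[OF adm] lam by simp
  ultimately show ?thesis by linarith
qed

lemma Mlam_ge:
  assumes bb: "bdd_below (range \<phi>)" and lmin: "\<And>x. l x \<ge> K0" and lam: "lam \<ge> 0"
    and ne: "admissible l \<phi> x (Phi x)"
  shows "Mop l \<phi> x \<le> Mlam l lam \<phi> x"
  unfolding Mlam_def using ne lower[OF bb lmin lam]
  by (intro cInf_greatest) auto

lemma Mlam_le:
  assumes bb: "bdd_below (range \<phi>)" and lmin: "\<And>x. l x \<ge> K0" and lam: "lam \<ge> 0"
    and adm: "admissible l \<phi> x \<mu>"
  shows "Mlam l lam \<phi> x \<le> (\<integral>\<xi>. \<phi> (x + \<xi>) + l \<xi> \<partial>\<mu>) + lam * DKL \<mu> (Phi x)"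
  unfolding Mlam_def using adm lower[OF bb lmin lam]
  by (intro cInf_lower) (auto intro!: bdd_belowI[of _ "Mop l \<phi> x"])

lemma Mlam_mono:
  assumes bb: "bdd_below (range \<phi>)" and lmin: "\<And>x. l x \<ge> K0" and lam: "0 < lam" "lam < lam'"
    and ne: "admissible l \<phi> x (Phi x)"
  shows "Mlam l lam \<phi> x \<le> Mlam l lam' \<phi> x"
  unfolding Mlam_def
proof (rule cInf_mono)
  show "{(\<integral>\<xi>. \<phi> (x + \<xi>) + l \<xi> \<partial>\<mu>) + lam' * DKL \<mu> (Phi x) |\<mu>. admissible l \<phi> x \<mu>} \<noteq> {}"
    using ne by auto
  show "bdd_below {(\<integral>\<xi>. \<phi> (x + \<xi>) + l \<xi> \<partial>\<mu>) + lam * DKL \<mu> (Phi x) |\<mu>. admissible l \<phi> x \<mu>}"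
    using lower[OF bb lmin] lam by (intro bdd_belowI[of _ "Mop l \<phi> x"]) auto
  fix b assume "b \<in> {(\<integral>\<xi>. \<phi> (x + \<xi>) + l \<xi> \<partial>\<mu>) + lam' * DKL \<mu> (Phi x) |\<mu>. admissible l \<phi> x \<mu>}"
  then obtain \<mu> where b: "b = (\<integral>\<xi>. \<phi> (x + \<xi>) + l \<xi> \<partial>\<mu>) + lam' * DKL \<mu> (Phi x)"
    and adm: "admissible l \<phi> x \<mu>" by blast
  have "lam * DKL \<mu> (Phi x) \<le> lam' * DKL \<mu> (Phi x)"
    using DKL_nonneg[OF adm] lam by (intro mult_right_mono) auto
  then show "\<exists>a\<in>{(\<integral>\<xi>. \<phi> (x + \<xi>) + l \<xi> \<partial>\<mu>) + lam * DKL \<mu> (Phi x) |\<mu>. admissible l \<phi> x \<mu>}. a \<le> b"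
    using adm b by fastforce
qed

lemma lip_admissible:
  assumes lip: "L-lipschitz_on UNIV \<phi>" and bb: "bdd_below (range \<phi>)"
    and llip: "Ll-lipschitz_on UNIV l"
  shows "admissible l \<phi> x (Phi x)"
proof -
  obtain C \<beta> where "\<beta> \<ge> 0" "\<And>y. \<bar>\<phi> y\<bar> \<le> C * (1 + \<bar>y\<bar> powr \<beta>)"
    using classF_bound[OF lip_classF[OF lip bb]] by blast
  then show ?thesis using Phi_admissible lip_meas[OF lip] llip by blast
qed

lemma part3:
  fixes l :: "real \<Rightarrow> real" and K0 Ll :: real
  assumes lmin: "\<And>x. l x \<ge> K0" and l0: "l 0 = K0"
    and lcoer: "filterlim l at_top at_infinity"
    and llip: "Ll-lipschitz_on UNIV l"
    and lip: "L-lipschitz_on UNIV \<phi>" and bb: "bdd_below (range \<phi>)" and cK: "compact K"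
  shows "uniform_limit K (\<lambda>lam. Mlam l lam \<phi>) (Mop l \<phi>) (at_right 0)"
  unfolding uniform_limit_iff
proof (intro allI impI)
  fix e :: real assume e: "e > 0"
  from bb obtain c0 where c0: "\<And>y. c0 \<le> \<phi> y" by (auto simp: bdd_below_def)
  from cK have "bounded K" by (rule compact_imp_bounded)
  then obtain R where R: "\<And>x. x \<in> K \<Longrightarrow> \<bar>x\<bar> \<le> R" by (auto simp: bounded_iff)
  have L0: "L \<ge> 0" using lip lipschitz_on_nonneg by blast
  have Ll0: "Ll \<ge> 0" using llip lipschitz_on_nonneg by blast
  define M1 where "M1 = \<bar>\<phi> 0\<bar> + L * R + K0"
  have "\<forall>\<^sub>F \<xi> in at_infinity. M1 + e - c0 < l \<xi>"
    using lcoer by (simp add: filterlim_at_top_dense)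
  then obtain R2 where R2: "\<And>\<xi>. R2 \<le> norm \<xi> \<Longrightarrow> M1 + e - c0 < l \<xi>"
    by (auto simp: eventually_at_infinity)
  define d where "d = e / (3 * (L + Ll + 1))"
  have d0: "d > 0" unfolding d_def using e L0 Ll0 by simp
  have dle: "(L + Ll) * d < e / 3"
  proof -
    have "(L + Ll) * d = e / 3 * ((L + Ll) / (L + Ll + 1))" unfolding d_def by (simp add: field_simps)
    also have "\<dots> < e / 3 * 1" using e L0 Ll0 by (intro mult_strict_left_mono) auto
    finally show ?thesis by simp
  qed
  define Bc where "Bc = \<bar>ln (2*d)\<bar> + ln (sqrt (2*pi)) + (\<bar>R2\<bar> + d + \<bar>R\<bar>)\<^sup>2 / 2"
  have ln0: "ln (sqrt (2*pi)) \<ge> 0" using pi_gt3 by simp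
  have Bc0: "Bc \<ge> 0" unfolding Bc_def using ln0 by simp
  define lam0 where "lam0 = e / (3 * (Bc + 1))"
  have lam00: "lam0 > 0" unfolding lam0_def using e Bc0 by simp
  show "\<forall>\<^sub>F lam in at_right 0. \<forall>x\<in>K. dist (Mlam l lam \<phi> x) (Mop l \<phi> x) < e"
    unfolding eventually_at_right[OF lam00]
  proof (intro exI[of _ lam0] conjI allI impI ballI)
    show "lam0 > 0" by (fact lam00)
    fix lam x assume lam: "0 < lam" "lam < lam0" and xK: "x \<in> K"
    have adm0: "admissible l \<phi> x (Phi x)" by (rule lip_admissible[OF lip bb llip])
    have ge: "Mop l \<phi> x \<le> Mlam l lam \<phi> x"
      using lam by (intro Mlam_ge[OF bb lmin _ adm0]) auto
    have "Mop l \<phi> x \<le> \<phi> (x + 0) + l 0" by (rule Mop_le[OF bb lmin])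
    also have "\<phi> (x + 0) \<le> \<bar>\<phi> 0\<bar> + L * \<bar>x - 0\<bar>" using lip_bound[OF lip, of x 0] by simp
    also have "L * \<bar>x - 0\<bar> \<le> L * R" using R[OF xK] L0 by (simp add: mult_left_mono)
    finally have MopM1: "Mop l \<phi> x \<le> M1" unfolding M1_def l0 by simp
    have "Mop l \<phi> x < Mop l \<phi> x + e / 3" using e by simp
    then have "\<exists>v\<in>range (\<lambda>\<xi>. \<phi> (x + \<xi>) + l \<xi>). v < Mop l \<phi> x + e / 3"
      unfolding Mop_def by (intro cInf_lessD) auto
    then obtain a where a: "\<phi> (x + a) + l a < Mop l \<phi> x + e / 3" by blast
    have aR2: "\<bar>a\<bar> \<le> \<bar>R2\<bar>"
    proof (rule ccontr)
      assume "\<not> \<bar>a\<bar> \<le> \<bar>R2\<bar>"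
      then have "M1 + e - c0 < l a" using R2[of a] by simp
      then show False using a MopM1 c0[of "x+a"] e by linarith
    qed
    note U = Unif_main[OF d0 lip llip, where x=x and a=a]
    have "DKL (Unif a d) (Phi x) \<le> \<bar>ln (2*d)\<bar> + ln (sqrt (2*pi)) + (\<bar>a\<bar> + d + \<bar>x\<bar>)\<^sup>2 / 2"
      by (rule U(3))
    also have "\<dots> \<le> Bc" unfolding Bc_def
      using aR2 R[OF xK] d0 by (intro add_mono order_refl divide_right_mono power_mono) auto
    finally have DB: "DKL (Unif a d) (Phi x) \<le> Bc" .
    have "lam * DKL (Unif a d) (Phi x) \<le> lam * Bc" using DB lam by (simp add: mult_left_mono)
    also have "\<dots> \<le> lam0 * Bc" using lam Bc0 by (simp add: mult_right_mono)
    also have "lam0 * Bc = e / 3 * (Bc / (Bc + 1))" unfolding lam0_def using Bc0 by (simp add: field_simps)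
    also have "\<dots> < e / 3 * 1" using e Bc0 by (intro mult_strict_left_mono) auto
    finally have lamD: "lam * DKL (Unif a d) (Phi x) < e / 3" by simp
    have "Mlam l lam \<phi> x \<le> (\<integral>\<xi>. \<phi> (x + \<xi>) + l \<xi> \<partial>Unif a d) + lam * DKL (Unif a d) (Phi x)"
      using lam by (intro Mlam_le[OF bb lmin _ U(1)]) auto
    then have "Mlam l lam \<phi> x < Mop l \<phi> x + e"
      using U(2) lamD dle a by linarith
    then show "dist (Mlam l lam \<phi> x) (Mop l \<phi> x) < e"
      using ge by (simp add: dist_real_def)
  qed
qed

theorem lemma3p3:
  fixes l :: "real \<Rightarrow> real" and K0 Ll :: real
  assumes K0pos: "K0 > 0"
    and l0: "l 0 = K0" and lmin: "\<And>x. l x \<ge> K0"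
    and lsub: "\<And>x y. l x + l y \<ge> l (x + y) + K0"
    and lcoer: "filterlim l at_top at_infinity"
    and llip: "Ll-lipschitz_on UNIV l"
  shows
    "(\<forall>\<phi> lam lam'. (\<exists>L. L-lipschitz_on UNIV \<phi>) \<longrightarrow> bdd_below (range \<phi>) \<longrightarrow>
        0 < lam \<longrightarrow> lam < lam' \<longrightarrow> (\<forall>x. Mlam l lam \<phi> x \<le> Mlam l lam' \<phi> x))
     \<and> (\<forall>\<phi> lam. lam > 0 \<longrightarrow> \<phi> \<in> classF \<longrightarrow> \<phi> \<in> borel_measurable borel \<longrightarrow>
        (\<forall>x. Mop l \<phi> x \<le> Mlam l lam \<phi> x))
     \<and> (\<forall>\<phi> K. (\<exists>L. L-lipschitz_on UNIV \<phi>) \<longrightarrow> bdd_below (range \<phi>) \<longrightarrow> compact K \<longrightarrow>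
        uniform_limit K (\<lambda>lam. Mlam l lam \<phi>) (Mop l \<phi>) (at_right 0))"
proof (intro conjI allI impI)
  fix \<phi> :: "real \<Rightarrow> real" and lam lam' :: real and x :: real
  assume "\<exists>L. L-lipschitz_on UNIV \<phi>" and bb: "bdd_below (range \<phi>)" and lam: "0 < lam" "lam < lam'"
  then obtain L where lip: "L-lipschitz_on UNIV \<phi>" by blast
  have adm: "admissible l \<phi> x (Phi x)" by (rule lip_admissible[OF lip bb llip])
  show "Mlam l lam \<phi> x \<le> Mlam l lam' \<phi> x"
    by (rule Mlam_mono[where l=l, OF bb lmin lam adm])
next
  fix \<phi> :: "real \<Rightarrow> real" and lam :: real and x :: real
  assume lam: "lam > 0" and F: "\<phi> \<in> classF" and m: "\<phi> \<in> borel_measurable borel"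
  have bb: "bdd_below (range \<phi>)" using F unfolding classF_def by simp
  obtain C \<beta> where "\<beta> \<ge> 0" "\<And>y. \<bar>\<phi> y\<bar> \<le> C * (1 + \<bar>y\<bar> powr \<beta>)"
    using classF_bound[OF F] by blast
  then have "admissible l \<phi> x (Phi x)" using Phi_admissible m llip by blast
  then show "Mop l \<phi> x \<le> Mlam l lam \<phi> x" using lam by (intro Mlam_ge[OF bb lmin]) auto
next
  fix \<phi> :: "real \<Rightarrow> real" and K :: "real set"
  assume "\<exists>L. L-lipschitz_on UNIV \<phi>" and bb: "bdd_below (range \<phi>)" and cK: "compact K"
  then obtain L where lip: "L-lipschitz_on UNIV \<phi>" by blast
  show "uniform_limit K (\<lambda>lam. Mlam l lam \<phi>) (Mop l \<phi>) (at_right 0)"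
    by (rule part3[where l=l, OF lmin l0 lcoer llip lip bb cK])
qed

end
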